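(* Let $n\ge 1$, $d\ge 2$, $1\le k\le n$ be integers and $R=n-k\lfloor n/k\rfloor$. For every $k$-separable state $\rho$ on $(\mathbb{C}^d)^{\otimes n}$, $$\|\tau(\rho)\|\le\sqrt{\big(d^{\lceil n/k\rceil}-1\big)^{R}\big(d^{\lfloor n/k\rfloor}-1\big)^{k-R}}.$$
   Context: Consider $n$ qudits with Hilbert space $(\mathbb{C}^d)^{\otimes n}$. Let $\lambda_0=\mathbb{1}_d$ and let $\lambda_1,\dots,\lambda_{d^2-1}$ be Hermitian traceless $d\times d$ matrices normalized so that $\mathrm{Tr}[\lambda_i\lambda_j]=d\,\delta_{ij}$. The full-body correlation tensor norm of a state $\rho$ is $\|\tau(\rho)\|=\big(\sum_{i_1,\dots,i_n=1}^{d^2-1}(\mathrm{Tr}[\rho\,\lambda_{i_1}\otimes\cdots\otimes\lambda_{i_n}])^2\big)^{1/2}$. A pure state is $k$-separable if it is a tensor product of $k$ pure states on the blocks of some partition of $\{1,\dots,n\}$ into $k$ nonempty blocks; a state is $k$-separable if it is a convex combination of $k$-separable pure states (partitions may differ between terms). *)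

theory Defs
  imports "HOL-Analysis.Analysis" "HOL-Library.Disjoint_Sets" "HOL-Library.FuncSet"
begin

text \<open>Computational basis of the qudits in a set S of sites: maps S \<rightarrow> {0..<d}
  (extensional, undefined outside S). Basis of (C^d)^{\<otimes> n} is cfg d {..<n}.\<close>
definition cfg :: "nat \<Rightarrow> nat set \<Rightarrow> (nat \<Rightarrow> nat) set" where
  "cfg d S = (S \<rightarrow>\<^sub>E {..<d})"

text \<open>Operators on (C^d)^{\<otimes> n} are matrices indexed by basis configurations;
  single-qudit operators are d x d matrices given as functions on indices < d.\<close>
type_synonym op1 = "nat \<Rightarrow> nat \<Rightarrow> complex"
type_synonym opn = "(nat \<Rightarrow> nat) \<Rightarrow> (nat \<Rightarrow> nat) \<Rightarrow> complex"

definition tensor_ops :: "nat \<Rightarrow> (nat \<Rightarrow> op1) \<Rightarrow> opn" where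
  "tensor_ops n A = (\<lambda>x y. \<Prod>j<n. A j (x j) (y j))"

definition trace_prod :: "nat \<Rightarrow> nat \<Rightarrow> opn \<Rightarrow> opn \<Rightarrow> complex" where
  "trace_prod d n \<rho> M = (\<Sum>x\<in>cfg d {..<n}. \<Sum>y\<in>cfg d {..<n}. \<rho> x y * M y x)"

definition gm_basis :: "nat \<Rightarrow> (nat \<Rightarrow> op1) \<Rightarrow> bool" where
  "gm_basis d lam \<longleftrightarrow>
     (\<forall>i\<in>{1..d^2-1}. (\<forall>a<d. \<forall>b<d. lam i a b = cnj (lam i b a))
                     \<and> (\<Sum>a<d. lam i a a) = 0)
   \<and> (\<forall>i\<in>{1..d^2-1}. \<forall>j\<in>{1..d^2-1}.
        (\<Sum>a<d. \<Sum>b<d. lam i a b * lam j b a) = (if i = j then of_nat d else 0))"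

definition tau_norm :: "nat \<Rightarrow> nat \<Rightarrow> (nat \<Rightarrow> op1) \<Rightarrow> opn \<Rightarrow> real" where
  "tau_norm d n lam \<rho> =
     sqrt (\<Sum>is\<in>({..<n} \<rightarrow>\<^sub>E {1..d^2-1}).
             (cmod (trace_prod d n \<rho> (tensor_ops n (\<lambda>j. lam (is j))))) ^ 2)"

definition unit_vec :: "nat \<Rightarrow> nat set \<Rightarrow> ((nat \<Rightarrow> nat) \<Rightarrow> complex) \<Rightarrow> bool" where
  "unit_vec d S \<phi> \<longleftrightarrow> (\<Sum>x\<in>cfg d S. (cmod (\<phi> x))^2) = 1"

definition ksep_pure :: "nat \<Rightarrow> nat \<Rightarrow> nat \<Rightarrow> ((nat \<Rightarrow> nat) \<Rightarrow> complex) \<Rightarrow> bool" where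
  "ksep_pure d n k \<psi> \<longleftrightarrow>
     (\<exists>P \<phi>. partition_on {..<n} P \<and> card P = k
         \<and> (\<forall>B\<in>P. unit_vec d B (\<phi> B))
         \<and> (\<forall>x\<in>cfg d {..<n}. \<psi> x = (\<Prod>B\<in>P. \<phi> B (restrict x B))))"

definition ksep_state :: "nat \<Rightarrow> nat \<Rightarrow> nat \<Rightarrow> opn \<Rightarrow> bool" where
  "ksep_state d n k \<rho> \<longleftrightarrow>
     (\<exists>m (p :: nat \<Rightarrow> real) \<psi>. (\<forall>i<m. p i \<ge> 0) \<and> (\<Sum>i<m. p i) = 1
        \<and> (\<forall>i<m. ksep_pure d n k (\<psi> i))
        \<and> (\<forall>x\<in>cfg d {..<n}. \<forall>y\<in>cfg d {..<n}.
              \<rho> x y = (\<Sum>i<m. complex_of_real (p i) * \<psi> i x * cnj (\<psi> i y))))"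

end

theory Submission
  imports Defs
begin



definition mrg :: "nat set \<Rightarrow> nat set \<Rightarrow> (nat \<Rightarrow> 'b) \<Rightarrow> (nat \<Rightarrow> 'b) \<Rightarrow> nat \<Rightarrow> 'b" where
  "mrg A B a b = (\<lambda>j. if j \<in> A then a j else if j \<in> B then b j else undefined)"

lemma bij_mrg:
  fixes A B :: "nat set"
  assumes "A \<inter> B = {}"
  shows "bij_betw (\<lambda>(a,b). mrg A B a b) ((A \<rightarrow>\<^sub>E T) \<times> (B \<rightarrow>\<^sub>E T)) ((A \<union> B) \<rightarrow>\<^sub>E T)"
proof (rule bij_betwI[where g="\<lambda>x. (restrict x A, restrict x B)"])
  show "(\<lambda>(a, b). mrg A B a b) \<in> ((A \<rightarrow>\<^sub>E T) \<times> (B \<rightarrow>\<^sub>E T)) \<rightarrow> ((A \<union> B) \<rightarrow>\<^sub>E T)"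
    by (auto simp: mrg_def PiE_iff extensional_def)
  show "(\<lambda>x. (restrict x A, restrict x B)) \<in> ((A \<union> B) \<rightarrow>\<^sub>E T) \<rightarrow> ((A \<rightarrow>\<^sub>E T) \<times> (B \<rightarrow>\<^sub>E T))"
    by auto
  fix p assume "p \<in> (A \<rightarrow>\<^sub>E T) \<times> (B \<rightarrow>\<^sub>E T)"
  then show "(restrict (case p of (a, b) \<Rightarrow> mrg A B a b) A, restrict (case p of (a, b) \<Rightarrow> mrg A B a b) B) = p"
    using assms by (cases p) (auto simp: mrg_def PiE_iff extensional_def restrict_def fun_eq_iff)
next
  fix x assume "x \<in> (A \<union> B) \<rightarrow>\<^sub>E T"
  then show "(case (restrict x A, restrict x B) of (a, b) \<Rightarrow> mrg A B a b) = x"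
    by (auto simp: mrg_def PiE_iff extensional_def fun_eq_iff)
qed

lemma sum_split_PiE:
  fixes A B :: "nat set"
  assumes "A \<inter> B = {}" "finite A" "finite B" "finite T"
  shows "(\<Sum>x\<in>(A \<union> B) \<rightarrow>\<^sub>E T. f (restrict x A) (restrict x B)) = (\<Sum>a\<in>A \<rightarrow>\<^sub>E T. \<Sum>b\<in>B \<rightarrow>\<^sub>E T. f a b)"
proof -
  have "(\<Sum>x\<in>(A \<union> B) \<rightarrow>\<^sub>E T. f (restrict x A) (restrict x B))
      = (\<Sum>p\<in>(A \<rightarrow>\<^sub>E T) \<times> (B \<rightarrow>\<^sub>E T). f (restrict ((\<lambda>(a,b). mrg A B a b) p) A) (restrict ((\<lambda>(a,b). mrg A B a b) p) B))"
    using sum.reindex_bij_betw[OF bij_mrg[OF assms(1)], of "\<lambda>x. f (restrict x A) (restrict x B)"] by simp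
  also have "\<dots> = (\<Sum>p\<in>(A \<rightarrow>\<^sub>E T) \<times> (B \<rightarrow>\<^sub>E T). f (fst p) (snd p))"
    apply (rule sum.cong, simp)
    using assms(1) by (auto simp: mrg_def PiE_iff extensional_def restrict_def fun_eq_iff intro!: arg_cong2[where f=f])
  also have "\<dots> = (\<Sum>a\<in>A \<rightarrow>\<^sub>E T. \<Sum>b\<in>B \<rightarrow>\<^sub>E T. f a b)"
    by (subst sum.cartesian_product) (simp add: split_def)
  finally show ?thesis .
qed




lemma bessel:
  fixes u :: "'e \<Rightarrow> 'z \<Rightarrow> complex" and v :: "'z \<Rightarrow> complex" and N :: real
  assumes X: "finite X" and E: "finite E" and N: "N > 0"
    and orth: "\<And>e f. e \<in> E \<Longrightarrow> f \<in> E \<Longrightarrow> (\<Sum>z\<in>X. cnj (u e z) * u f z) = (if e = f then of_real N else 0)"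
  shows "(\<Sum>e\<in>E. (cmod (\<Sum>z\<in>X. cnj (u e z) * v z))^2) \<le> N * (\<Sum>z\<in>X. (cmod (v z))^2)"
proof -
  define c where "c e = (\<Sum>z\<in>X. cnj (u e z) * v z)" for e
  define S where "S = (\<Sum>e\<in>E. (cmod (c e))^2)"
  define w where "w z = (\<Sum>e\<in>E. c e * u e z)" for z
  define V where "V = (\<Sum>z\<in>X. (cmod (v z))^2)"
  define W where "W = (\<Sum>z\<in>X. (cmod (w z))^2)"
  have S0: "S \<ge> 0" unfolding S_def by (simp add: sum_nonneg)
  have V0: "V \<ge> 0" unfolding V_def by (simp add: sum_nonneg)
  have sq: "complex_of_real ((cmod a)^2) = a * cnj a" for a :: complex
    by (simp add: complex_mult_cnj cmod_def)
  have 1: "(\<Sum>z\<in>X. v z * cnj (w z)) = of_real S"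
  proof -
    have "(\<Sum>z\<in>X. v z * cnj (w z)) = (\<Sum>z\<in>X. \<Sum>e\<in>E. cnj (c e) * (cnj (u e z) * v z))"
      unfolding w_def by (simp add: sum_distrib_left mult_ac)
    also have "\<dots> = (\<Sum>e\<in>E. cnj (c e) * c e)"
      by (subst sum.swap) (simp add: c_def sum_distrib_left)
    also have "\<dots> = of_real S"
      unfolding S_def of_real_sum sq by (simp add: mult_ac)
    finally show ?thesis .
  qed
  have 2: "complex_of_real W = of_real N * of_real S"
  proof -
    have "of_real W = (\<Sum>z\<in>X. w z * cnj (w z))"
      unfolding W_def of_real_sum sq by simp
    also have "\<dots> = (\<Sum>z\<in>X. \<Sum>e\<in>E. \<Sum>f\<in>E. c e * cnj (c f) * (cnj (u f z) * u e z))"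
      unfolding w_def by (simp add: sum_distrib_left sum_distrib_right mult_ac) (rule sum.cong, simp, rule sum.swap)
    also have "\<dots> = (\<Sum>e\<in>E. \<Sum>f\<in>E. c e * cnj (c f) * (\<Sum>z\<in>X. cnj (u f z) * u e z))"
      by (simp add: sum.swap[of _ X] sum_distrib_left)
    also have "\<dots> = (\<Sum>e\<in>E. \<Sum>f\<in>E. c e * cnj (c f) * (if f = e then of_real N else 0))"
      by (intro sum.cong refl) (simp add: orth)
    also have "\<dots> = (\<Sum>e\<in>E. of_real N * (c e * cnj (c e)))"
      using E by (simp add: if_distrib mult_ac cong: if_cong)
    also have "\<dots> = of_real N * of_real S"
      unfolding S_def of_real_sum sq by (simp add: sum_distrib_left)
    finally show ?thesis .
  qed
  hence W: "W = N * S" by (metis of_real_eq_iff of_real_mult)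
  have "S = cmod (\<Sum>z\<in>X. v z * cnj (w z))" using 1 S0 by simp
  also have "\<dots> \<le> (\<Sum>z\<in>X. cmod (v z) * cmod (w z))"
    by (rule order_trans[OF norm_sum]) (simp add: norm_mult)
  finally have "S \<le> (\<Sum>z\<in>X. cmod (v z) * cmod (w z))" .
  hence "S^2 \<le> (\<Sum>z\<in>X. cmod (v z) * cmod (w z))^2"
    using S0 by (simp add: power_mono)
  also have "\<dots> \<le> V * W" unfolding V_def W_def by (rule Cauchy_Schwarz_ineq_sum)
  finally have "S * S \<le> (N * V) * S" using W by (simp add: power2_eq_square mult_ac)
  hence "S \<le> N * V"
    using S0 by (cases "S = 0") (use N V0 in auto)
  thus ?thesis unfolding S_def V_def c_def .
qed




definition L :: "(nat \<Rightarrow> op1) \<Rightarrow> nat \<Rightarrow> op1" where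
  "L lam i a b = (if i = 0 then (if a = b then 1 else 0) else lam i a b)"

definition tp :: "nat \<Rightarrow> (nat \<Rightarrow> op1) \<Rightarrow> nat set \<Rightarrow> ((nat \<Rightarrow> nat) \<Rightarrow> complex) \<Rightarrow> (nat \<Rightarrow> nat) \<Rightarrow> complex" where
  "tp d lam S \<psi> e = (\<Sum>x\<in>cfg d S. \<Sum>y\<in>cfg d S. \<psi> x * cnj (\<psi> y) * (\<Prod>j\<in>S. lam (e j) (y j) (x j)))"

definition Q :: "nat \<Rightarrow> (nat \<Rightarrow> op1) \<Rightarrow> nat set \<Rightarrow> ((nat \<Rightarrow> nat) \<Rightarrow> complex) \<Rightarrow> real" where
  "Q d lam S \<psi> = (\<Sum>e\<in>S \<rightarrow>\<^sub>E {1..d^2-1}. (cmod (tp d lam S \<psi> e))^2)"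

lemma site_orth:
  assumes gm: "gm_basis d lam" and i: "i \<in> {0..d^2-1}" and i': "i' \<in> {0..d^2-1}"
  shows "(\<Sum>a<d. \<Sum>b<d. cnj (L lam i a b) * L lam i' a b) = (if i = i' then of_nat d else 0)"
proof -
  have herm: "\<And>i a b. i \<in> {1..d^2-1} \<Longrightarrow> a < d \<Longrightarrow> b < d \<Longrightarrow> cnj (lam i a b) = lam i b a"
    using gm unfolding gm_basis_def by (metis complex_cnj_cnj)
  have tr: "\<And>i. i \<in> {1..d^2-1} \<Longrightarrow> (\<Sum>a<d. lam i a a) = 0"
    using gm unfolding gm_basis_def by blast
  have on: "\<And>i j. i \<in> {1..d^2-1} \<Longrightarrow> j \<in> {1..d^2-1} \<Longrightarrow>
        (\<Sum>a<d. \<Sum>b<d. lam i a b * lam j b a) = (if i = j then of_nat d else 0)"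
    using gm unfolding gm_basis_def by blast
  consider "i = 0" "i' = 0" | "i = 0" "i' \<noteq> 0" | "i \<noteq> 0" "i' = 0" | "i \<noteq> 0" "i' \<noteq> 0" by blast
  then show ?thesis
  proof cases
    case 1
    have "\<And>a b. cnj (L lam i a b) * L lam i' a b = (if b = a then 1 else 0)" using 1 by (simp add: L_def)
    then show ?thesis using 1 by simp
  next
    case 2
    then have "i' \<in> {1..d^2-1}" using i' by auto
    moreover have "\<And>a b. cnj (L lam i a b) * L lam i' a b = (if b = a then lam i' a b else 0)" using 2 by (simp add: L_def)
    ultimately show ?thesis using 2 tr by simp
  next
    case 3
    then have ii: "i \<in> {1..d^2-1}" using i by auto
    have "(\<Sum>a<d. \<Sum>b<d. cnj (L lam i a b) * L lam i' a b) = cnj (\<Sum>a<d. lam i a a)"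
    proof -
      have "\<And>a b. cnj (L lam i a b) * L lam i' a b = (if b = a then cnj (lam i a b) else 0)" using 3 by (simp add: L_def)
      then show ?thesis by simp
    qed
    then show ?thesis using 3 tr[OF ii] by simp
  next
    case 4
    then have ii: "i \<in> {1..d^2-1}" "i' \<in> {1..d^2-1}" using i i' by auto
    have "(\<Sum>a<d. \<Sum>b<d. cnj (L lam i a b) * L lam i' a b) = (\<Sum>a<d. \<Sum>b<d. lam i b a * lam i' a b)"
      using 4 ii by (simp add: L_def herm)
    also have "\<dots> = (\<Sum>b<d. \<Sum>a<d. lam i b a * lam i' a b)" by (rule sum.swap)
    also have "\<dots> = (if i = i' then of_nat d else 0)" using on[OF ii] .
    finally show ?thesis .
  qed
qed

lemma sum_cfg_prod:
  assumes "finite S"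
  shows "(\<Sum>x\<in>cfg d S. \<Prod>j\<in>S. f j (x j)) = (\<Prod>j\<in>S. \<Sum>a<d. (f j a :: complex))"
  unfolding cfg_def using prod_sum_PiE[OF assms, of "\<lambda>_. {..<d}" f] by simp

lemma sum_cfg_prod2:
  assumes "finite S"
  shows "(\<Sum>x\<in>cfg d S. \<Sum>y\<in>cfg d S. \<Prod>j\<in>S. f j (x j) (y j)) = (\<Prod>j\<in>S. \<Sum>a<d. \<Sum>b<d. (f j a b :: complex))"
proof -
  have "(\<Sum>x\<in>cfg d S. \<Sum>y\<in>cfg d S. \<Prod>j\<in>S. f j (x j) (y j)) = (\<Sum>x\<in>cfg d S. \<Prod>j\<in>S. \<Sum>b<d. f j (x j) b)"
    by (intro sum.cong refl) (rule sum_cfg_prod[OF assms])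
  also have "\<dots> = (\<Prod>j\<in>S. \<Sum>a<d. \<Sum>b<d. f j a b)" by (rule sum_cfg_prod[OF assms])
  finally show ?thesis .
qed

lemma finite_cfg: "finite S \<Longrightarrow> finite (cfg d S)"
  unfolding cfg_def by (simp add: finite_PiE)




lemma block_bound:
  assumes gm: "gm_basis d lam" and S: "finite S" "S \<noteq> {}" and u: "unit_vec d S \<psi>"
  shows "Q d lam S \<psi> \<le> real d ^ card S - 1"
proof -
  define X where "X = cfg d S \<times> cfg d S"
  define E where "E = S \<rightarrow>\<^sub>E {0..d^2-1}"
  define F where "F = S \<rightarrow>\<^sub>E {1..d^2-1}"
  define uu where "uu e z = (\<Prod>j\<in>S. L lam (e j) (fst z j) (snd z j))" for e :: "nat \<Rightarrow> nat" and z :: "(nat \<Rightarrow> nat) \<times> (nat \<Rightarrow> nat)"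
  define v where "v z = \<psi> (fst z) * cnj (\<psi> (snd z))" for z :: "(nat \<Rightarrow> nat) \<times> (nat \<Rightarrow> nat)"
  define N where "N = real d ^ card S"
  define c where "c e = (\<Sum>z\<in>X. cnj (uu e z) * v z)" for e
  have fX: "finite X" unfolding X_def using finite_cfg[OF S(1)] by simp
  have fE: "finite E" unfolding E_def using S by (simp add: finite_PiE)
  have dpos: "d > 0"
  proof (rule ccontr)
    assume "\<not> d > 0" hence "cfg d S = {}" using S(2) unfolding cfg_def by (auto simp: PiE_eq_empty_iff)
    thus False using u unfolding unit_vec_def by simp
  qed
  have N: "N > 0" unfolding N_def using dpos by simp
  have sumX: "(\<Sum>z\<in>X. g z) = (\<Sum>x\<in>cfg d S. \<Sum>y\<in>cfg d S. g (x, y))" for g :: "_ \<Rightarrow> 'c::comm_monoid_add"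
    unfolding X_def by (simp add: sum.cartesian_product)
  have orth: "(\<Sum>z\<in>X. cnj (uu e z) * uu f z) = (if e = f then of_real N else 0)" if e: "e \<in> E" and f: "f \<in> E" for e f
  proof -
    have "(\<Sum>z\<in>X. cnj (uu e z) * uu f z) = (\<Sum>x\<in>cfg d S. \<Sum>y\<in>cfg d S. \<Prod>j\<in>S. cnj (L lam (e j) (x j) (y j)) * L lam (f j) (x j) (y j))"
      unfolding sumX uu_def by (simp add: prod.distrib cnj_prod)
    also have "\<dots> = (\<Prod>j\<in>S. \<Sum>a<d. \<Sum>b<d. cnj (L lam (e j) a b) * L lam (f j) a b)"
      by (rule sum_cfg_prod2[OF S(1)])
    also have "\<dots> = (\<Prod>j\<in>S. if e j = f j then of_nat d else 0)"
      by (intro prod.cong refl site_orth[OF gm]) (use e f in \<open>auto simp: E_def PiE_iff\<close>)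
    also have "\<dots> = (if e = f then of_real N else 0)"
    proof (cases "e = f")
      case True then show ?thesis by (simp add: N_def)
    next
      case False
      then obtain j where "j \<in> S" "e j \<noteq> f j" using e f unfolding E_def by (metis PiE_ext)
      then show ?thesis using False S(1) by (intro trans[OF prod_zero]) auto
    qed
    finally show ?thesis .
  qed
  have bes: "(\<Sum>e\<in>E. (cmod (c e))^2) \<le> N * (\<Sum>z\<in>X. (cmod (v z))^2)"
    unfolding c_def by (rule bessel[OF fX fE N orth])
  have V: "(\<Sum>z\<in>X. (cmod (v z))^2) = 1"
  proof -
    have "(\<Sum>z\<in>X. (cmod (v z))^2) = (\<Sum>x\<in>cfg d S. \<Sum>y\<in>cfg d S. (cmod (\<psi> x))^2 * (cmod (\<psi> y))^2)"
      unfolding sumX v_def by (simp add: norm_mult power_mult_distrib)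
    also have "\<dots> = (\<Sum>x\<in>cfg d S. (cmod (\<psi> x))^2) * (\<Sum>y\<in>cfg d S. (cmod (\<psi> y))^2)"
      by (simp add: sum_product)
    finally show ?thesis using u unfolding unit_vec_def by simp
  qed
  define e0 where "e0 = restrict (\<lambda>_. 0::nat) S"
  have e0E: "e0 \<in> E" unfolding e0_def E_def by auto
  have e0F: "e0 \<notin> F" using S(2) unfolding e0_def F_def by (auto simp: PiE_iff)
  have FE: "F \<subseteq> E" unfolding F_def E_def by (auto simp: PiE_iff)
  have c0: "c e0 = 1"
  proof -
    have del: "uu e0 (x, y) = (if x = y then 1 else 0)" if "x \<in> cfg d S" "y \<in> cfg d S" for x y
    proof (cases "x = y")
      case True
      have "uu e0 (x, y) = 1" unfolding uu_def
        by (rule prod.neutral) (simp add: e0_def L_def True)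
      then show ?thesis using True by simp
    next
      case False
      have "\<exists>j\<in>S. x j \<noteq> y j"
      proof (rule ccontr)
        assume "\<not> (\<exists>j\<in>S. x j \<noteq> y j)"
        hence "x = y" using that PiE_ext[of x S _ y] unfolding cfg_def by blast
        thus False using False by simp
      qed
      then obtain j where "j \<in> S" "x j \<noteq> y j" by blast
      then show ?thesis using False S(1) unfolding uu_def e0_def by (intro trans[OF prod_zero]) (auto simp: L_def)
    qed
    have "c e0 = (\<Sum>x\<in>cfg d S. \<Sum>y\<in>cfg d S. (if x = y then 1 else 0) * v (x, y))"
      unfolding c_def sumX by (intro sum.cong refl) (simp add: del)
    also have "\<dots> = (\<Sum>x\<in>cfg d S. v (x, x))"
    proof (intro sum.cong refl)
      fix x assume "x \<in> cfg d S"
      have "\<And>y. (if x = y then 1 else 0) * v (x, y) = (if x = y then v (x, x) else 0)" by simp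
      then show "(\<Sum>y\<in>cfg d S. (if x = y then 1 else 0) * v (x, y)) = v (x, x)"
        using \<open>x \<in> cfg d S\<close> finite_cfg[OF S(1)] by (simp add: sum.delta)
    qed
    also have "\<dots> = of_real (\<Sum>x\<in>cfg d S. (cmod (\<psi> x))^2)"
      unfolding v_def of_real_sum by (intro sum.cong refl) (simp add: complex_mult_cnj cmod_def)
    finally show ?thesis using u unfolding unit_vec_def by simp
  qed
  have cF: "c e = tp d lam S \<psi> e" if "e \<in> F" for e
  proof -
    have "c e = (\<Sum>x\<in>cfg d S. \<Sum>y\<in>cfg d S. \<psi> x * cnj (\<psi> y) * (\<Prod>j\<in>S. lam (e j) (y j) (x j)))"
      unfolding c_def sumX
    proof (intro sum.cong refl)
      fix x y assume xy: "x \<in> cfg d S" "y \<in> cfg d S"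
      have "cnj (uu e (x, y)) = (\<Prod>j\<in>S. lam (e j) (y j) (x j))"
        unfolding uu_def cnj_prod
      proof (intro prod.cong refl)
        fix j assume j: "j \<in> S"
        have ej: "e j \<in> {1..d^2-1}" using that j unfolding F_def by auto
        have "x j < d" "y j < d" using xy j unfolding cfg_def by auto
        then show "cnj (L lam (e j) (fst (x, y) j) (snd (x, y) j)) = lam (e j) (y j) (x j)"
        proof -
          have "lam (e j) (y j) (x j) = cnj (lam (e j) (x j) (y j))"
            using gm ej \<open>x j < d\<close> \<open>y j < d\<close> unfolding gm_basis_def by blast
          then show ?thesis using ej by (simp add: L_def)
        qed
      qed
      then show "cnj (uu e (x, y)) * v (x, y) = \<psi> x * cnj (\<psi> y) * (\<Prod>j\<in>S. lam (e j) (y j) (x j))"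
        unfolding v_def by (simp add: mult_ac)
    qed
    then show ?thesis unfolding tp_def .
  qed
  have "1 + Q d lam S \<psi> = (\<Sum>e\<in>insert e0 F. (cmod (c e))^2)"
    unfolding Q_def F_def[symmetric] using e0F finite_subset[OF FE fE] by (subst sum.insert) (auto simp: c0 cF)
  also have "\<dots> \<le> (\<Sum>e\<in>E. (cmod (c e))^2)"
    using fE FE e0E by (intro sum_mono2) auto
  also have "\<dots> \<le> N" using bes V by simp
  finally show ?thesis unfolding N_def by simp
qed




lemma tp_split:
  fixes A B :: "nat set"
  assumes AB: "A \<inter> B = {}" and fA: "finite A" and fB: "finite B"
    and psi: "\<And>x. x \<in> cfg d (A \<union> B) \<Longrightarrow> \<psi> x = \<alpha> (restrict x A) * \<beta> (restrict x B)"
  shows "tp d lam (A \<union> B) \<psi> e = tp d lam A \<alpha> (restrict e A) * tp d lam B \<beta> (restrict e B)"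
proof -
  define P where "P a a' = \<alpha> a * cnj (\<alpha> a') * (\<Prod>j\<in>A. lam (e j) (a' j) (a j))" for a a' :: "nat \<Rightarrow> nat"
  define R where "R b b' = \<beta> b * cnj (\<beta> b') * (\<Prod>j\<in>B. lam (e j) (b' j) (b j))" for b b' :: "nat \<Rightarrow> nat"
  have cA: "cfg d A = A \<rightarrow>\<^sub>E {..<d}" and cB: "cfg d B = B \<rightarrow>\<^sub>E {..<d}" and cAB: "cfg d (A \<union> B) = (A \<union> B) \<rightarrow>\<^sub>E {..<d}"
    by (simp_all add: cfg_def)
  have trm: "\<psi> x * cnj (\<psi> y) * (\<Prod>j\<in>A \<union> B. lam (e j) (y j) (x j))
      = P (restrict x A) (restrict y A) * R (restrict x B) (restrict y B)"
    if "x \<in> cfg d (A \<union> B)" "y \<in> cfg d (A \<union> B)" for x y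
  proof -
    have "(\<Prod>j\<in>A \<union> B. lam (e j) (y j) (x j)) = (\<Prod>j\<in>A. lam (e j) (y j) (x j)) * (\<Prod>j\<in>B. lam (e j) (y j) (x j))"
      using AB fA fB by (simp add: prod.union_disjoint)
    also have "(\<Prod>j\<in>A. lam (e j) (y j) (x j)) = (\<Prod>j\<in>A. lam (e j) (restrict y A j) (restrict x A j))"
      by (intro prod.cong refl) simp
    also have "(\<Prod>j\<in>B. lam (e j) (y j) (x j)) = (\<Prod>j\<in>B. lam (e j) (restrict y B j) (restrict x B j))"
      by (intro prod.cong refl) simp
    finally show ?thesis using psi[OF that(1)] psi[OF that(2)] unfolding P_def R_def by (simp add: mult_ac)
  qed
  have "tp d lam (A \<union> B) \<psi> e = (\<Sum>x\<in>cfg d (A \<union> B). \<Sum>y\<in>cfg d (A \<union> B). P (restrict x A) (restrict y A) * R (restrict x B) (restrict y B))"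
    unfolding tp_def by (intro sum.cong refl) (simp add: trm)
  also have "\<dots> = (\<Sum>x\<in>cfg d (A \<union> B). (\<lambda>a b. \<Sum>a'\<in>cfg d A. \<Sum>b'\<in>cfg d B. P a a' * R b b') (restrict x A) (restrict x B))"
    unfolding cAB cA cB
  proof (rule sum.cong[OF refl])
    fix x
    show "(\<Sum>y\<in>(A \<union> B) \<rightarrow>\<^sub>E {..<d}. P (restrict x A) (restrict y A) * R (restrict x B) (restrict y B)) =
      (\<Sum>a'\<in>A \<rightarrow>\<^sub>E {..<d}. \<Sum>b'\<in>B \<rightarrow>\<^sub>E {..<d}. P (restrict x A) a' * R (restrict x B) b')"
      using sum_split_PiE[OF AB fA fB, where T="{..<d}" and f="\<lambda>a' b'. P (restrict x A) a' * R (restrict x B) b'"] by simp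
  qed
  also have "\<dots> = (\<Sum>a\<in>cfg d A. \<Sum>b\<in>cfg d B. \<Sum>a'\<in>cfg d A. \<Sum>b'\<in>cfg d B. P a a' * R b b')"
    unfolding cAB cA cB by (rule sum_split_PiE[OF AB fA fB]) simp
  also have "\<dots> = (\<Sum>a\<in>cfg d A. \<Sum>a'\<in>cfg d A. P a a') * (\<Sum>b\<in>cfg d B. \<Sum>b'\<in>cfg d B. R b b')"
    by (simp only: sum_product)
  also have "(\<Sum>a\<in>cfg d A. \<Sum>a'\<in>cfg d A. P a a') = tp d lam A \<alpha> (restrict e A)"
    unfolding tp_def P_def by (intro sum.cong refl) (auto intro!: prod.cong)
  also have "(\<Sum>b\<in>cfg d B. \<Sum>b'\<in>cfg d B. R b b') = tp d lam B \<beta> (restrict e B)"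
    unfolding tp_def R_def by (intro sum.cong refl) (auto intro!: prod.cong)
  finally show ?thesis .
qed

lemma Q_split:
  fixes A B :: "nat set"
  assumes AB: "A \<inter> B = {}" and fA: "finite A" and fB: "finite B"
    and psi: "\<And>x. x \<in> cfg d (A \<union> B) \<Longrightarrow> \<psi> x = \<alpha> (restrict x A) * \<beta> (restrict x B)"
  shows "Q d lam (A \<union> B) \<psi> = Q d lam A \<alpha> * Q d lam B \<beta>"
proof -
  have "Q d lam (A \<union> B) \<psi> = (\<Sum>e\<in>(A \<union> B) \<rightarrow>\<^sub>E {1..d^2-1}.
      (\<lambda>a b. (cmod (tp d lam A \<alpha> a))^2 * (cmod (tp d lam B \<beta> b))^2) (restrict e A) (restrict e B))"
    unfolding Q_def by (intro sum.cong refl) (simp add: tp_split[where \<psi>=\<psi> and \<alpha>=\<alpha> and \<beta>=\<beta>, OF AB fA fB psi] norm_mult power_mult_distrib)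
  also have "\<dots> = (\<Sum>a\<in>A \<rightarrow>\<^sub>E {1..d^2-1}. \<Sum>b\<in>B \<rightarrow>\<^sub>E {1..d^2-1}. (cmod (tp d lam A \<alpha> a))^2 * (cmod (tp d lam B \<beta> b))^2)"
    by (rule sum_split_PiE[OF AB fA fB]) simp
  also have "\<dots> = Q d lam A \<alpha> * Q d lam B \<beta>"
    unfolding Q_def by (simp add: sum_product)
  finally show ?thesis .
qed


lemma Q_partition:
  fixes P :: "nat set set"
  assumes "finite P" "\<And>C. C \<in> P \<Longrightarrow> finite C" "disjoint P"
    and "\<And>x. x \<in> cfg d (\<Union>P) \<Longrightarrow> \<psi> x = (\<Prod>C\<in>P. \<phi> C (restrict x C))"
  shows "Q d lam (\<Union>P) \<psi> = (\<Prod>C\<in>P. Q d lam C (\<phi> C))"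
  using assms
proof (induction P arbitrary: \<psi> rule: finite_induct)
  case empty
  have "tp d lam {} \<psi> (\<lambda>_. undefined) = 1"
    using empty(3) by (simp add: tp_def cfg_def)
  then show ?case by (simp add: Q_def)
next
  case (insert C P)
  define \<beta> where "\<beta> y = (\<Prod>C'\<in>P. \<phi> C' (restrict y C'))" for y :: "nat \<Rightarrow> nat"
  have disj: "C \<inter> \<Union>P = {}"
    using insert(2) insert(5) unfolding disjoint_def by (auto simp: disjnt_def)
  have fC: "finite C" using insert(4) by simp
  have fP: "finite (\<Union>P)" using insert(1) insert(4) by auto
  have dP: "disjoint P" using insert(5) by (auto simp: disjoint_def)
  have IH: "Q d lam (\<Union>P) \<beta> = (\<Prod>C\<in>P. Q d lam C (\<phi> C))"
    by (rule insert.IH) (use insert(4) dP in \<open>simp_all add: \<beta>_def restrict_def\<close>)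
  have rr: "\<beta> (restrict x (\<Union>P)) = \<beta> x" for x
    unfolding \<beta>_def by (intro prod.cong refl) (auto intro!: arg_cong[where f="\<phi> _"] simp: Int_absorb1)
  have psi: "\<psi> x = \<phi> C (restrict x C) * \<beta> (restrict x (\<Union>P))" if "x \<in> cfg d (C \<union> \<Union>P)" for x
    using insert(6)[of x] that insert(1,2) unfolding rr by (simp add: \<beta>_def restrict_def)
  have "Q d lam (\<Union>(insert C P)) \<psi> = Q d lam (C \<union> \<Union>P) \<psi>" by simp
  also have "\<dots> = Q d lam C (\<phi> C) * Q d lam (\<Union>P) \<beta>"
    by (rule Q_split[where \<psi>=\<psi> and \<alpha>="\<phi> C" and \<beta>=\<beta>, OF disj fC fP psi])
  also have "\<dots> = (\<Prod>C\<in>insert C P. Q d lam C (\<phi> C))"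
    using IH insert(1,2) by simp
  finally show ?case .
qed




locale gfun =
  fixes d :: nat
  assumes d2: "d \<ge> 2"
begin

definition g :: "nat \<Rightarrow> real" where "g m = real d ^ m - 1"
definition h :: "nat \<Rightarrow> real" where "h m = ln (g m)"
definition \<delta> :: "nat \<Rightarrow> real" where "\<delta> i = h (Suc i) - h i"

lemma g_ge1: "m \<ge> 1 \<Longrightarrow> g m \<ge> 1"
proof -
  assume m: "m \<ge> 1"
  have "real d ^ 1 \<le> real d ^ m" using d2 m by (intro power_increasing) auto
  hence "real d \<le> real d ^ m" by (simp only: power_one_right)
  moreover have "real d \<ge> 2" using d2 by simp
  ultimately show ?thesis unfolding g_def by linarith
qed

lemma g_pos: "m \<ge> 1 \<Longrightarrow> g m > 0" using g_ge1 by fastforce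

lemma exp_h: "m \<ge> 1 \<Longrightarrow> exp (h m) = g m" unfolding h_def using g_pos by simp

lemma concave: assumes "i \<ge> 1" shows "\<delta> (Suc i) \<le> \<delta> i"
proof -
  define x where "x = real d ^ i"
  have x: "x \<ge> 0" unfolding x_def by simp
  have "g i * g (Suc (Suc i)) \<le> g (Suc i) * g (Suc i)"
  proof -
    have "g i * g (Suc (Suc i)) = (x - 1) * (real d * real d * x - 1)" unfolding g_def x_def by (simp add: mult_ac)
    moreover have "g (Suc i) * g (Suc i) = (real d * x - 1) * (real d * x - 1)" unfolding g_def x_def by simp
    moreover have "(x - 1) * (real d * real d * x - 1) \<le> (real d * x - 1) * (real d * x - 1)"
    proof -
      have "(real d * x - 1) * (real d * x - 1) - (x - 1) * (real d * real d * x - 1) = x * (real d - 1)^2"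
        by (simp add: algebra_simps power2_eq_square)
      moreover have "x * (real d - 1)^2 \<ge> 0" using x by simp
      ultimately show ?thesis by linarith
    qed
    ultimately show ?thesis by simp
  qed
  hence "ln (g i * g (Suc (Suc i))) \<le> ln (g (Suc i) * g (Suc i))"
    using g_pos assms by (subst ln_le_cancel_iff) auto
  hence "h i + h (Suc (Suc i)) \<le> h (Suc i) + h (Suc i)"
  proof -
    have p: "g i \<noteq> 0" "g (Suc i) \<noteq> 0" "g (Suc (Suc i)) \<noteq> 0" using g_pos assms by (auto simp del: One_nat_def) (metis le_SucI not_less_eq_eq order_less_irrefl)+
    show ?thesis using \<open>ln (g i * g (Suc (Suc i))) \<le> ln (g (Suc i) * g (Suc i))\<close>
      unfolding h_def by (simp add: ln_mult p)
  qed
  thus ?thesis unfolding \<delta>_def by simp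
qed

lemma mono_delta: "1 \<le> i \<Longrightarrow> i \<le> j \<Longrightarrow> \<delta> j \<le> \<delta> i"
proof (induction j)
  case 0 then show ?case by simp
next
  case (Suc j)
  show ?case
  proof (cases "i = Suc j")
    case True then show ?thesis by simp
  next
    case False
    then have "i \<le> j" using Suc.prems by simp
    then show ?thesis using Suc.IH Suc.prems concave[of j] by fastforce
  qed
qed

lemma tangent:
  assumes m: "m \<ge> 1" and q: "q \<ge> 1"
  shows "h m \<le> h q + (real m - real q) * \<delta> q"
proof (cases "q \<le> m")
  case True
  have "h (q + t) \<le> h q + real t * \<delta> q" for t
  proof (induction t)
    case 0 then show ?case by simp
  next
    case (Suc t)
    have "h (q + Suc t) = h (q + t) + \<delta> (q + t)" unfolding \<delta>_def by simp
    also have "\<delta> (q + t) \<le> \<delta> q" using mono_delta[of q "q + t"] q by simp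
    finally show ?case using Suc.IH by (simp add: algebra_simps)
  qed
  from this[of "m - q"] True show ?thesis by (simp add: of_nat_diff algebra_simps)
next
  case False
  have "q - t \<ge> 1 \<Longrightarrow> h (q - t) \<le> h q - real t * \<delta> q" for t
  proof (induction t)
    case 0 then show ?case by simp
  next
    case (Suc t)
    have e: "q - t = Suc (q - Suc t)" using Suc.prems by simp
    have "h (q - Suc t) = h (q - t) - \<delta> (q - Suc t)" unfolding \<delta>_def e by simp
    moreover have "\<delta> q \<le> \<delta> (q - Suc t)" using mono_delta[of "q - Suc t" q] Suc.prems by simp
    moreover have "h (q - t) \<le> h q - real t * \<delta> q" using Suc.IH Suc.prems by simp
    ultimately show ?case by (simp add: algebra_simps)
  qed
  from this[of "q - m"] False m show ?thesis by (simp add: of_nat_diff algebra_simps)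
qed

lemma prod_bound:
  fixes P :: "'a set" and c :: "'a \<Rightarrow> nat"
  assumes fin: "finite P" and k: "card P = k" and k1: "k \<ge> 1" and n: "(\<Sum>C\<in>P. c C) = n"
    and c1: "\<And>C. C \<in> P \<Longrightarrow> c C \<ge> 1" and kn: "k \<le> n"
  shows "(\<Prod>C\<in>P. g (c C)) \<le> g (Suc (n div k)) ^ (n - k * (n div k)) * g (n div k) ^ (k - (n - k * (n div k)))"
proof -
  define q where "q = n div k"
  define R where "R = n - k * q"
  have q1: "q \<ge> 1" unfolding q_def using div_le_mono[OF kn, of k] k1 by simp
  have nR: "n = k * q + R" unfolding R_def q_def by (simp add: minus_mult_div_eq_mod)
  have Rk: "R < k" unfolding R_def q_def using k1 by (simp add: minus_mult_div_eq_mod)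
  have "(\<Sum>C\<in>P. h (c C)) \<le> (\<Sum>C\<in>P. h q + (real (c C) - real q) * \<delta> q)"
    by (intro sum_mono tangent c1 q1)
  also have "\<dots> = (\<Sum>C\<in>P. (h q - real q * \<delta> q) + \<delta> q * real (c C))"
    by (intro sum.cong) (simp_all add: algebra_simps)
  also have "\<dots> = real k * (h q - real q * \<delta> q) + \<delta> q * real n"
    using k n by (simp add: sum.distrib flip: sum_distrib_left of_nat_sum)
  also have "\<dots> = real k * h q + (real n - real k * real q) * \<delta> q"
    by (simp add: algebra_simps)
  also have "\<dots> = real (k - R) * h q + real R * h (Suc q)"
    using nR Rk unfolding \<delta>_def by (simp add: of_nat_diff algebra_simps)
  finally have le: "(\<Sum>C\<in>P. h (c C)) \<le> real (k - R) * h q + real R * h (Suc q)" .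
  have "(\<Prod>C\<in>P. g (c C)) = exp (\<Sum>C\<in>P. h (c C))"
  proof -
    have "(\<Prod>C\<in>P. g (c C)) = (\<Prod>C\<in>P. exp (h (c C)))"
    proof (rule prod.cong[OF refl])
      fix C assume "C \<in> P"
      then show "g (c C) = exp (h (c C))" using exp_h[OF c1] by simp
    qed
    then show ?thesis by (simp add: exp_sum fin)
  qed
  also have "\<dots> \<le> exp (real (k - R) * h q + real R * h (Suc q))" using le by simp
  also have "\<dots> = g q ^ (k - R) * g (Suc q) ^ R"
    using exp_h[OF q1] by (simp add: exp_add exp_of_nat_mult exp_h)
  finally show ?thesis unfolding q_def[symmetric] R_def[symmetric] by (simp add: mult_ac)
qed

end



lemma pure_bound:
  assumes gm: "gm_basis d lam" and d2: "d \<ge> 2" and k1: "1 \<le> k" and kn: "k \<le> n"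
    and ks: "ksep_pure d n k \<psi>"
  shows "Q d lam {..<n} \<psi> \<le> (real d ^ Suc (n div k) - 1) ^ (n - k * (n div k)) * (real d ^ (n div k) - 1) ^ (k - (n - k * (n div k)))"
proof -
  interpret gfun d using d2 by unfold_locales
  obtain P \<phi> where P: "partition_on {..<n} P" and cP: "card P = k"
    and u: "\<And>B. B \<in> P \<Longrightarrow> unit_vec d B (\<phi> B)"
    and psi: "\<And>x. x \<in> cfg d {..<n} \<Longrightarrow> \<psi> x = (\<Prod>B\<in>P. \<phi> B (restrict x B))"
    using ks unfolding ksep_pure_def by blast
  have UP: "\<Union>P = {..<n}" using partition_onD1[OF P] by simp
  have fP: "finite P" using finite_UnionD[of P] UP by simp
  have fC: "\<And>C. C \<in> P \<Longrightarrow> finite C" using UP by (metis Union_upper finite_lessThan finite_subset)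
  have ne: "\<And>C. C \<in> P \<Longrightarrow> C \<noteq> {}" using partition_onD3[OF P] by blast
  have dj: "disjoint P" using partition_onD2[OF P] .
  have "Q d lam {..<n} \<psi> = Q d lam (\<Union>P) \<psi>" using UP by simp
  also have "\<dots> = (\<Prod>C\<in>P. Q d lam C (\<phi> C))"
    by (rule Q_partition[OF fP fC dj]) (use psi UP in simp_all)
  also have "\<dots> \<le> (\<Prod>C\<in>P. g (card C))"
  proof (rule prod_mono)
    fix C assume C: "C \<in> P"
    show "0 \<le> Q d lam C (\<phi> C) \<and> Q d lam C (\<phi> C) \<le> g (card C)"
      using block_bound[OF gm fC[OF C] ne[OF C] u[OF C]] unfolding g_def Q_def by (simp add: sum_nonneg)
  qed
  also have "\<dots> \<le> g (Suc (n div k)) ^ (n - k * (n div k)) * g (n div k) ^ (k - (n - k * (n div k)))"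
  proof (rule prod_bound[OF fP cP k1 _ _ kn])
    show "(\<Sum>C\<in>P. card C) = n" using card_Union_disjoint[OF dj fC] UP by simp
    show "\<And>C. C \<in> P \<Longrightarrow> 1 \<le> card C" using fC ne by (simp add: Suc_le_eq card_gt_0_iff)
  qed
  finally show ?thesis unfolding g_def .
qed


lemma jensen_sq:
  fixes p :: "nat \<Rightarrow> real" and t :: "nat \<Rightarrow> complex"
  assumes p0: "\<And>i. i < m \<Longrightarrow> p i \<ge> 0" and p1: "(\<Sum>i<m. p i) = 1"
  shows "(cmod (\<Sum>i<m. complex_of_real (p i) * t i))^2 \<le> (\<Sum>i<m. p i * (cmod (t i))^2)"
proof -
  have "cmod (\<Sum>i<m. complex_of_real (p i) * t i) \<le> (\<Sum>i<m. cmod (complex_of_real (p i) * t i))"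
    by (rule norm_sum)
  also have "\<dots> = (\<Sum>i<m. sqrt (p i) * (sqrt (p i) * cmod (t i)))"
    by (intro sum.cong refl) (simp add: norm_mult p0 mult.assoc[symmetric])
  finally have a: "cmod (\<Sum>i<m. complex_of_real (p i) * t i) \<le> (\<Sum>i<m. sqrt (p i) * (sqrt (p i) * cmod (t i)))" .
  have "(cmod (\<Sum>i<m. complex_of_real (p i) * t i))^2 \<le> (\<Sum>i<m. sqrt (p i) * (sqrt (p i) * cmod (t i)))^2"
    using a by (simp add: power_mono)
  also have "\<dots> \<le> (\<Sum>i<m. (sqrt (p i))^2) * (\<Sum>i<m. (sqrt (p i) * cmod (t i))^2)"
    by (rule Cauchy_Schwarz_ineq_sum)
  also have "\<dots> = (\<Sum>i<m. p i * (cmod (t i))^2)"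
    using p1 p0 by (simp add: power_mult_distrib)
  finally show ?thesis .
qed

theorem mainTheorem6:
  fixes n d k :: nat and lam :: "nat \<Rightarrow> op1" and \<rho> :: opn
  assumes "n \<ge> 1" and "d \<ge> 2" and "1 \<le> k" and "k \<le> n"
    and "gm_basis d lam"
    and "ksep_state d n k \<rho>"
  shows "tau_norm d n lam \<rho> \<le>
    sqrt ((real d ^ nat \<lceil>real n / real k\<rceil> - 1) ^ (n - k * (n div k))
        * (real d ^ (n div k) - 1) ^ (k - (n - k * (n div k))))"
proof -
  define q where "q = n div k"
  define R where "R = n - k * q"
  define Bd where "Bd = (real d ^ Suc q - 1) ^ R * (real d ^ q - 1) ^ (k - R)"
  obtain m and p :: "nat \<Rightarrow> real" and \<psi> where H: "(\<forall>i<m. p i \<ge> 0) \<and> (\<Sum>i<m. p i) = 1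
        \<and> (\<forall>i<m. ksep_pure d n k (\<psi> i))
        \<and> (\<forall>x\<in>cfg d {..<n}. \<forall>y\<in>cfg d {..<n}.
              \<rho> x y = (\<Sum>i<m. complex_of_real (p i) * \<psi> i x * cnj (\<psi> i y)))"
    using assms(6) unfolding ksep_state_def by blast
  have p0: "\<And>i. i < m \<Longrightarrow> p i \<ge> 0" and p1: "(\<Sum>i<m. p i) = 1"
    and ks: "\<And>i. i < m \<Longrightarrow> ksep_pure d n k (\<psi> i)"
    and rho: "\<And>x y. x \<in> cfg d {..<n} \<Longrightarrow> y \<in> cfg d {..<n} \<Longrightarrow>
          \<rho> x y = (\<Sum>i<m. complex_of_real (p i) * \<psi> i x * cnj (\<psi> i y))"
    using H by auto
  have Qb: "Q d lam {..<n} (\<psi> i) \<le> Bd" if "i < m" for i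
    using pure_bound[OF assms(5) assms(2) assms(3) assms(4) ks[OF that]] unfolding Bd_def q_def R_def .
  have tr: "trace_prod d n \<rho> (tensor_ops n (\<lambda>j. lam (e j))) = (\<Sum>i<m. complex_of_real (p i) * tp d lam {..<n} (\<psi> i) e)" for e
  proof -
    have "trace_prod d n \<rho> (tensor_ops n (\<lambda>j. lam (e j)))
      = (\<Sum>x\<in>cfg d {..<n}. \<Sum>y\<in>cfg d {..<n}. \<Sum>i<m. complex_of_real (p i) * (\<psi> i x * cnj (\<psi> i y) * (\<Prod>j<n. lam (e j) (y j) (x j))))"
      unfolding trace_prod_def tensor_ops_def
      by (intro sum.cong refl) (simp add: rho sum_distrib_left mult_ac)
    also have "\<dots> = (\<Sum>i<m. complex_of_real (p i) * tp d lam {..<n} (\<psi> i) e)"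
      unfolding tp_def sum_distrib_left
      by (subst sum.swap) (intro sum.cong refl, rule sum.swap)
    finally show ?thesis .
  qed
  have "(\<Sum>e\<in>{..<n} \<rightarrow>\<^sub>E {1..d^2-1}. (cmod (trace_prod d n \<rho> (tensor_ops n (\<lambda>j. lam (e j)))))^2)
      \<le> (\<Sum>e\<in>{..<n} \<rightarrow>\<^sub>E {1..d^2-1}. \<Sum>i<m. p i * (cmod (tp d lam {..<n} (\<psi> i) e))^2)"
    unfolding tr by (intro sum_mono jensen_sq p0 p1)
  also have "\<dots> = (\<Sum>i<m. p i * Q d lam {..<n} (\<psi> i))"
    unfolding Q_def by (subst sum.swap) (simp add: sum_distrib_left)
  also have "\<dots> \<le> (\<Sum>i<m. p i * Bd)"
    by (intro sum_mono mult_left_mono Qb p0) auto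
  also have "\<dots> = Bd" using p1 by (simp flip: sum_distrib_right)
  finally have main: "tau_norm d n lam \<rho> \<le> sqrt Bd"
    unfolding tau_norm_def by (rule real_sqrt_le_mono)
  have "Bd = (real d ^ nat \<lceil>real n / real k\<rceil> - 1) ^ (n - k * (n div k))
        * (real d ^ (n div k) - 1) ^ (k - (n - k * (n div k)))"
  proof (cases "R = 0")
    case True then show ?thesis unfolding Bd_def R_def q_def by simp
  next
    case False
    have nR: "n = k * q + R" unfolding R_def q_def by (simp add: minus_mult_div_eq_mod)
    have Rk: "R < k" unfolding R_def q_def using assms(3) by (simp add: minus_mult_div_eq_mod)
    have kpos: "real k > 0" using assms(3) by simp
    have eq: "real n / real k = real q + real R / real k"
      using nR kpos by (simp add: field_simps)
    have "real R / real k < 1" "real R / real k > 0" using Rk False kpos by auto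
    hence "\<lceil>real n / real k\<rceil> = int (Suc q)"
      unfolding eq by (intro ceiling_unique) auto
    hence c: "nat \<lceil>real n / real k\<rceil> = Suc q" by simp
    show ?thesis unfolding q_def[symmetric] R_def[symmetric] c Bd_def ..
  qed
  then show ?thesis using main by simp
qed



end
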